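(* Let $\beta>0$, $\nu\in(1/3,1)$, $\mu_{\mathrm{pp},\gamma}=4(1-\gamma)$, $\mu_\gamma=2\gamma+\beta+2\sqrt{\gamma(\gamma+\beta)}$, $\mu=(1+\sqrt{1+\beta})^2$, $C=C(\beta)=-\frac12\big(2-2\sqrt{1+\beta}+\frac{\beta}{\sqrt{1+\beta}}\big)$ (which is positive), and $\varepsilon=Ct^{\nu-1}$. Then for $t$ large enough and all $\gamma\in[0,1-t^{\nu-1}(1+\beta/2)]$, $$\frac{(\mu_{\mathrm{pp},\gamma}+\mu_\gamma+\varepsilon-\mu)t}{t^{1/3}}\le -Ct^{\nu-1/3}.$$ *)

theory Defs
  imports Complex_Main
begin

definition mu_pp :: "real \<Rightarrow> real" where
  "mu_pp \<gamma> = 4 * (1 - \<gamma>)"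

definition mu_gamma :: "real \<Rightarrow> real \<Rightarrow> real" where
  "mu_gamma \<beta> \<gamma> = 2 * \<gamma> + \<beta> + 2 * sqrt (\<gamma> * (\<gamma> + \<beta>))"

definition mu_full :: "real \<Rightarrow> real" where
  "mu_full \<beta> = (1 + sqrt (1 + \<beta>))^2"

definition C_const :: "real \<Rightarrow> real" where
  "C_const \<beta> = - (1/2) * (2 - 2 * sqrt (1 + \<beta>) + \<beta> / sqrt (1 + \<beta>))"

end

theory Submission
  imports Defs
begin

lemma key:
  fixes \<beta> \<gamma> e :: real
  assumes b: "\<beta> > 0" and e: "e > 0" and g0: "0 \<le> \<gamma>" and g1: "\<gamma> \<le> 1 - e * (1 + \<beta>/2)"
  shows "mu_pp \<gamma> + mu_gamma \<beta> \<gamma> + C_const \<beta> * e - mu_full \<beta> \<le> - C_const \<beta> * e"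
proof -
  define s where "s = sqrt (1 + \<beta>)"
  have s1: "s > 1" using b by (simp add: s_def)
  have ss: "s^2 = 1 + \<beta>" using b by (simp add: s_def)
  have bs: "\<beta> = s^2 - 1" using ss by simp
  have am: "sqrt (\<gamma> * (\<gamma> + \<beta>)) \<le> (\<gamma> * s + (\<gamma> + \<beta>) / s) / 2"
  proof -
    have "\<gamma> * (\<gamma> + \<beta>) = (\<gamma> * s) * ((\<gamma> + \<beta>) / s)" using s1 by (simp add: field_simps)
    moreover have "sqrt ((\<gamma> * s) * ((\<gamma> + \<beta>) / s)) \<le> (\<gamma> * s + (\<gamma> + \<beta>) / s) / 2"
      by (rule arith_geo_mean_sqrt) (use g0 s1 b in auto)
    ultimately show ?thesis by simp
  qed
  define L where "L = 4*(1-\<gamma>) + 2*\<gamma> + \<beta> + (\<gamma> * s + (\<gamma> + \<beta>) / s) + 2 * C_const \<beta> * e - (1+s)^2"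
  have LHS: "mu_pp \<gamma> + mu_gamma \<beta> \<gamma> + C_const \<beta> * e - mu_full \<beta> + C_const \<beta> * e \<le> L"
    using am unfolding L_def mu_pp_def mu_gamma_def mu_full_def s_def by simp
  have Lform: "L = (\<gamma> - 1) * ((s - 1)^2 / s) - e * (2 - 2*s + (s^2-1)/s)"
    unfolding L_def C_const_def s_def[symmetric] using s1
    by (simp add: bs field_simps power2_eq_square)
  have c: "(s - 1)^2 / s \<ge> 0" using s1 by simp
  have "(\<gamma> - 1) * ((s - 1)^2 / s) \<le> (- e * (1 + \<beta>/2)) * ((s - 1)^2 / s)"
    by (rule mult_right_mono) (use g1 c in auto)
  hence "L \<le> (- e * (1 + \<beta>/2)) * ((s - 1)^2 / s) - e * (2 - 2*s + (s^2-1)/s)"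
    using Lform by simp
  also have "\<dots> = - e * ((s-1)^2 * (s^2 - 1) / (2*s))"
    using s1 by (simp add: bs field_simps power2_eq_square)
  also have "\<dots> \<le> 0"
  proof -
    have "s^2 - 1 \<ge> 0" using bs b by simp
    hence "(s-1)^2 * (s^2 - 1) / (2*s) \<ge> 0" using s1 by simp
    thus ?thesis using e by (metis mult_nonneg_nonneg neg_le_0_iff_le mult_minus_left less_imp_le)
  qed
  finally show ?thesis using LHS by simp
qed

theorem proposition3p13:
  fixes \<beta> \<nu> :: real
  assumes "\<beta> > 0" and "1/3 < \<nu>" and "\<nu> < 1"
  shows "\<exists>T. \<forall>t::real \<ge> T. \<forall>\<gamma>::real.
           0 \<le> \<gamma> \<and> \<gamma> \<le> 1 - t powr (\<nu> - 1) * (1 + \<beta> / 2) \<longrightarrow>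
           (mu_pp \<gamma> + mu_gamma \<beta> \<gamma> + C_const \<beta> * t powr (\<nu> - 1) - mu_full \<beta>) * t / t powr (1/3)
             \<le> - C_const \<beta> * t powr (\<nu> - 1/3)"
proof (intro exI[of _ 1] allI impI)
  fix t \<gamma> :: real
  assume t: "t \<ge> 1" and g: "0 \<le> \<gamma> \<and> \<gamma> \<le> 1 - t powr (\<nu> - 1) * (1 + \<beta> / 2)"
  have e: "t powr (\<nu> - 1) > 0" using t by simp
  have k: "mu_pp \<gamma> + mu_gamma \<beta> \<gamma> + C_const \<beta> * t powr (\<nu> - 1) - mu_full \<beta> \<le> - C_const \<beta> * t powr (\<nu> - 1)"
    using key[OF assms(1) e] g by blast
  have p: "t / t powr (1/3) = t powr (2/3)"
  proof -
    have "t = t powr 1" using t by simp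
    also have "\<dots> = t powr (1/3) * t powr (2/3)" using t by (simp add: powr_add[symmetric])
    finally show ?thesis using t by (simp add: field_simps)
  qed
  have q: "t powr (\<nu> - 1/3) = t powr (\<nu> - 1) * t powr (2/3)"
    using t by (simp add: powr_add[symmetric])
  have "(mu_pp \<gamma> + mu_gamma \<beta> \<gamma> + C_const \<beta> * t powr (\<nu> - 1) - mu_full \<beta>) * t / t powr (1/3)
     = (mu_pp \<gamma> + mu_gamma \<beta> \<gamma> + C_const \<beta> * t powr (\<nu> - 1) - mu_full \<beta>) * t powr (2/3)"
    using p by (simp add: mult.assoc[symmetric] times_divide_eq_right[symmetric])
  also have "\<dots> \<le> (- C_const \<beta> * t powr (\<nu> - 1)) * t powr (2/3)"
    by (rule mult_right_mono[OF k]) simp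
  also have "\<dots> = - C_const \<beta> * t powr (\<nu> - 1/3)" using q by simp
  finally show "(mu_pp \<gamma> + mu_gamma \<beta> \<gamma> + C_const \<beta> * t powr (\<nu> - 1) - mu_full \<beta>) * t / t powr (1/3)
             \<le> - C_const \<beta> * t powr (\<nu> - 1/3)" .
qed

end
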